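(* Let $A, B \in \mathbb{R}^{n\times n}$ be symmetric, isospectral, and both friendly. Then there is at most one doubly stochastic matrix $X \in \mathcal{D}(n)$ with $\|XA - BX\|_F^2 = 0$ (equivalently, with $XA = BX$).
   Context: A real symmetric matrix $A$ is called friendly if all of its eigenvalues are distinct (each has multiplicity one) and each unit eigenvector $u$ satisfies $\langle u, \mathbb{1}_n\rangle \ne 0$, where $\mathbb{1}_n$ is the all-ones vector. $A$ and $B$ are isospectral if they have the same distinct eigenvalues with the same multiplicities. $\mathcal{D}(n)$ is the set of doubly stochastic $n\times n$ matrices (entrywise nonnegative with all row and column sums equal to 1). $\|\cdot\|_F$ is the Frobenius norm. *)

theory Defs
  imports "HOL-Analysis.Analysis" "HOL-Computational_Algebra.Polynomial"
begin

definition sym_mat :: "real^'n^'n \<Rightarrow> bool" where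
  "sym_mat A \<longleftrightarrow> transpose A = A"

definition char_pol :: "real^'n^'n \<Rightarrow> real poly" where
  "char_pol A = det (\<chi> i j. (if i = j then [:0, 1:] else 0) - [:A $ i $ j:])"

definition eig_mult :: "real^'n^'n \<Rightarrow> real \<Rightarrow> nat" where
  "eig_mult A c = order c (char_pol A)"

definition isospectral :: "real^'n^'n \<Rightarrow> real^'n^'n \<Rightarrow> bool" where
  "isospectral A B \<longleftrightarrow> (\<forall>c. eig_mult A c = eig_mult B c)"

definition friendly :: "real^'n^'n \<Rightarrow> bool" where
  "friendly A \<longleftrightarrow> sym_mat A \<and> (\<forall>c. eig_mult A c \<le> 1) \<and>
     (\<forall>u c. norm u = 1 \<and> A *v u = c *\<^sub>R u \<longrightarrow> u \<bullet> (1::real^'n) \<noteq> 0)"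

definition doubly_stochastic :: "real^'n^'n \<Rightarrow> bool" where
  "doubly_stochastic X \<longleftrightarrow> (\<forall>i j. X $ i $ j \<ge> 0) \<and>
     (\<forall>i. (\<Sum>j\<in>UNIV. X $ i $ j) = 1) \<and> (\<forall>j. (\<Sum>i\<in>UNIV. X $ i $ j) = 1)"

definition frob_norm :: "real^'n^'n \<Rightarrow> real" where
  "frob_norm M = sqrt (\<Sum>i\<in>UNIV. \<Sum>j\<in>UNIV. (M $ i $ j)\<^sup>2)"

end

theory Submission
  imports Defs
begin

lemma sym_inner:
  fixes A :: "real^'n^'n"
  assumes "transpose A = A"
  shows "(A *v x) \<bullet> y = x \<bullet> (A *v y)"
proof -
  have "A *v x = transpose A *v x" using assms by simp
  also have "\<dots> = x v* A" by simp
  finally show ?thesis by (simp add: dot_lmul_matrix)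
qed

lemma quad_ineq:
  fixes a b :: real
  assumes "\<forall>t. 2*t*a + t^2*b \<le> 0"
  shows "a = 0"
proof (rule ccontr)
  assume a: "a \<noteq> 0"
  define c where "c = 1 + \<bar>b\<bar>"
  have c: "c > 0" "2*c + b > 0" unfolding c_def by auto
  have "2*(a/c)*a + (a/c)^2*b \<le> 0" using assms by blast
  hence "(2*c + b) * a^2 / c^2 \<le> 0" using c by (simp add: field_simps power2_eq_square)
  moreover have "(2*c + b) * a^2 / c^2 > 0" using c a by simp
  ultimately show False by linarith
qed

lemma eig_exists:
  fixes A :: "real^'n^'n"
  assumes sym: "transpose A = A" and S: "subspace S"
    and inv: "\<And>x. x \<in> S \<Longrightarrow> A *v x \<in> S"
    and x0: "x0 \<in> S" "x0 \<noteq> 0"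
  shows "\<exists>u c. u \<in> S \<and> norm u = 1 \<and> A *v u = c *\<^sub>R u"
proof -
  define q where "q y = y \<bullet> (A *v y)" for y
  define K where "K = S \<inter> sphere 0 1"
  have "compact K" unfolding K_def
    using closed_subspace[OF S] compact_sphere by (simp add: closed_Int_compact)
  moreover have "x0 /\<^sub>R norm x0 \<in> K" unfolding K_def
    using x0 S by (simp add: subspace_scale)
  hence "K \<noteq> {}" by blast
  moreover have "continuous_on K q" unfolding q_def
    by (intro continuous_intros linear_continuous_on bounded_linear_intros)
  ultimately obtain u where uK: "u \<in> K" and umax: "\<And>y. y \<in> K \<Longrightarrow> q y \<le> q u"
    using continuous_attains_sup by metis
  define M where "M = q u"
  have uS: "u \<in> S" and un: "norm u = 1" using uK by (auto simp: K_def)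
  have uu: "u \<bullet> u = 1" using un by (simp add: dot_square_norm)
  have bound: "q y \<le> M * (y \<bullet> y)" if "y \<in> S" for y
  proof (cases "y = 0")
    case True then show ?thesis by (simp add: q_def)
  next
    case False
    have "y /\<^sub>R norm y \<in> K" unfolding K_def using that False S by (simp add: subspace_scale)
    hence "q (y /\<^sub>R norm y) \<le> M" using umax M_def by blast
    moreover have "q (y /\<^sub>R norm y) = q y / (norm y)^2"
      by (simp add: q_def matrix_vector_mult_scaleR power2_eq_square field_simps)
    ultimately have "q y \<le> M * (norm y)^2" using False by (simp add: divide_le_eq)
    thus ?thesis by (simp add: dot_square_norm)
  qed
  have orth: "y \<bullet> (A *v u) = 0" if yS: "y \<in> S" and yu: "y \<bullet> u = 0" for y
  proof -
    have "\<forall>t. 2*t*(y \<bullet> (A *v u)) + t^2*(q y - M*(y\<bullet>y)) \<le> 0"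
    proof
      fix t :: real
      have "u + t *\<^sub>R y \<in> S" using uS yS S by (simp add: subspace_add subspace_scale)
      hence f1: "q (u + t *\<^sub>R y) \<le> M * ((u + t *\<^sub>R y) \<bullet> (u + t *\<^sub>R y))" by (rule bound)
      have f2: "q (u + t *\<^sub>R y) = M + 2*t*(y \<bullet> (A *v u)) + t^2 * q y"
      proof -
        have "u \<bullet> (A *v y) = y \<bullet> (A *v u)"
          using sym_inner[OF sym, of u y] by (simp add: inner_commute)
        thus ?thesis unfolding q_def M_def
          by (simp add: matrix_vector_right_distrib matrix_vector_mult_scaleR
              inner_add_left inner_add_right power2_eq_square algebra_simps)
      qed
      have f3: "(u + t *\<^sub>R y) \<bullet> (u + t *\<^sub>R y) = 1 + t^2 * (y \<bullet> y)"
        using uu yu by (simp add: inner_add_left inner_add_right inner_commute power2_eq_square)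
      have "M + 2*t*(y \<bullet> (A *v u)) + t^2 * q y \<le> M * (1 + t^2 * (y \<bullet> y))"
        using f1 unfolding f2 f3 .
      then show "2*t*(y \<bullet> (A *v u)) + t^2*(q y - M*(y\<bullet>y)) \<le> 0"
        by (simp add: algebra_simps)
    qed
    thus ?thesis by (rule quad_ineq)
  qed
  define r where "r = A *v u - M *\<^sub>R u"
  have rS: "r \<in> S" unfolding r_def using inv[OF uS] uS S by (simp add: subspace_diff subspace_scale)
  have ru: "r \<bullet> u = 0" unfolding r_def M_def q_def using uu sym_inner[OF sym, of u u]
    by (simp add: inner_diff_right inner_commute)
  have "r \<bullet> (A *v u) = 0" using orth[OF rS ru] .
  hence "r \<bullet> r = 0" using ru unfolding r_def by (simp add: inner_diff_right)
  hence "r = 0" by simp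
  hence "A *v u = M *\<^sub>R u" unfolding r_def by simp
  thus ?thesis using uS un by blast
qed


lemma frob_zero:
  fixes M :: "real^'n^'n"
  assumes "(frob_norm M)\<^sup>2 = 0"
  shows "M = 0"
proof -
  have nn: "0 \<le> (\<Sum>i\<in>UNIV. \<Sum>j\<in>UNIV. (M $ i $ j)\<^sup>2)" by (intro sum_nonneg) auto
  hence "(\<Sum>i\<in>UNIV. \<Sum>j\<in>UNIV. (M $ i $ j)\<^sup>2) = 0" using assms by (simp add: frob_norm_def)
  hence "\<forall>i\<in>UNIV. (\<Sum>j\<in>UNIV. (M $ i $ j)\<^sup>2) = 0"
    by (subst (asm) sum_nonneg_eq_0_iff) (auto intro: sum_nonneg)
  hence "\<forall>i j. (M $ i $ j)\<^sup>2 = 0"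
    by (auto simp: sum_nonneg_eq_0_iff)
  thus ?thesis by (simp add: vec_eq_iff)
qed

lemma ds_one:
  fixes X :: "real^'n^'n"
  assumes "doubly_stochastic X"
  shows "X *v (1::real^'n) = 1"
  using assms by (simp add: doubly_stochastic_def vec_eq_iff matrix_vector_mult_def)

lemma uniq:
  fixes A B Z :: "real^'n^'n"
  assumes symA: "sym_mat A" and symB: "sym_mat B" and fr: "friendly A"
    and ZAB: "Z ** A = B ** Z" and Z1: "Z *v (1::real^'n) = 0"
  shows "Z = 0"
proof (rule ccontr)
  assume "Z \<noteq> 0"
  moreover have "transpose (0::real^'n^'n) = 0" by (simp add: vec_eq_iff transpose_def)
  ultimately have "transpose Z \<noteq> 0" by (metis transpose_transpose)
  then obtain v where v: "transpose Z *v v \<noteq> 0"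
    by (metis matrix_eq matrix_vector_mult_0)
  define S where "S = range (\<lambda>w. transpose Z *v w)"
  have sub: "subspace S" unfolding S_def
    by (intro linear_subspace_image subspace_UNIV matrix_vector_mul_linear)
  have tA: "transpose A = A" and tB: "transpose B = B" using symA symB by (auto simp: sym_mat_def)
  have AZ: "A ** transpose Z = transpose Z ** B"
  proof -
    have "transpose (Z ** A) = transpose (B ** Z)" using ZAB by simp
    thus ?thesis by (simp add: matrix_transpose_mul tA tB)
  qed
  have inv: "A *v x \<in> S" if xS: "x \<in> S" for x
  proof -
    obtain w where "x = transpose Z *v w" using xS unfolding S_def by blast
    hence "A *v x = transpose Z *v (B *v w)" by (simp only: matrix_vector_mul_assoc AZ)
    thus ?thesis unfolding S_def by blast
  qed
  obtain u c where u: "u \<in> S" "norm u = 1" "A *v u = c *\<^sub>R u"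
    using eig_exists[OF tA sub inv, of "transpose Z *v v"] v unfolding S_def by blast
  obtain w where uw: "u = transpose Z *v w" using u(1) unfolding S_def by blast
  have "u \<bullet> (1::real^'n) = w \<bullet> (Z *v 1)"
    unfolding uw transpose_matrix_vector by (rule dot_lmul_matrix)
  hence "u \<bullet> (1::real^'n) = 0" using Z1 by simp
  thus False using fr u unfolding friendly_def by blast
qed

theorem mainTheorem9:
  fixes A B :: "real^'n^'n"
  assumes "sym_mat A" and "sym_mat B"
    and "isospectral A B"
    and "friendly A" and "friendly B"
  shows "\<forall>X Y. doubly_stochastic X \<and> (frob_norm (X ** A - B ** X))\<^sup>2 = 0 \<and>
                doubly_stochastic Y \<and> (frob_norm (Y ** A - B ** Y))\<^sup>2 = 0 \<longrightarrow> X = Y"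
proof (intro allI impI)
  fix X Y :: "real^'n^'n"
  assume h: "doubly_stochastic X \<and> (frob_norm (X ** A - B ** X))\<^sup>2 = 0 \<and>
                doubly_stochastic Y \<and> (frob_norm (Y ** A - B ** Y))\<^sup>2 = 0"
  have X: "X ** A = B ** X" using frob_zero[of "X ** A - B ** X"] h by simp
  have Y: "Y ** A = B ** Y" using frob_zero[of "Y ** A - B ** Y"] h by simp
  have "(X - Y) ** A = B ** (X - Y)"
    using X Y by (simp add: vec_eq_iff matrix_matrix_mult_def sum_subtractf algebra_simps)
  moreover have "(X - Y) *v (1::real^'n) = 0"
    using ds_one[of X] ds_one[of Y] h by (simp add: matrix_vector_mult_diff_rdistrib)
  ultimately have "X - Y = 0" using uniq assms by blast
  thus "X = Y" by simp
qed

end
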